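(* Let $r\in(0,1)$ and let $X$ be the geometric armadillo tail with parameter $r$. Then there exists a closed saddle connection on $X$ in the direction of slope $\frac{1}{2-r}$ that intersects every square torus $\square_k$, $k\ge1$.
   Context: Set $l_k=r^{k-1}$, $s_k=l_1+\dots+l_k$ ($s_0=0$), and $\square_k=[s_{k-1},s_k]\times[0,l_k]\subset\mathbb{R}^2$. The geometric armadillo tail with parameter $r$ is obtained from $P=\bigcup_k\square_k$ by gluing the top edge of each $\square_k$ to its bottom edge by vertical translation, and for each $k\ge1$ gluing $\{s_k\}\times[l_{k+1},l_k]$ (the part of the right edge of $\square_k$ not shared with $\square_{k+1}$) by horizontal translation to $\{0\}\times[l_{k+1},l_k]$; then taking the metric completion, in which all vertices become a single wild singularity. With these identifications each $\square_k$ is a square torus (the surface is an infinite connected sum of them). Slopes are measured in the polygonal representation $P$. A saddle connection is a closed straight-line segment starting and ending at the singularity with no singular point in its interior. *)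

theory Defs
  imports "HOL-Analysis.Analysis"
begin

text \<open>Geometric armadillo tail with parameter r, in its polygonal representation
  P = union of the squares sq r k, k \<ge> 1.  Points of the plane are real \<times> real.\<close>

definition arm_l :: "real \<Rightarrow> nat \<Rightarrow> real" where
  "arm_l r k = r ^ (k - 1)"

definition arm_s :: "real \<Rightarrow> nat \<Rightarrow> real" where
  "arm_s r k = (\<Sum>j\<in>{1..k}. arm_l r j)"

definition arm_sq :: "real \<Rightarrow> nat \<Rightarrow> (real \<times> real) set" where
  "arm_sq r k = {arm_s r (k - 1) .. arm_s r k} \<times> {0 .. arm_l r k}"

definition arm_P :: "real \<Rightarrow> (real \<times> real) set" where
  "arm_P r = (\<Union>k\<in>{1..}. arm_sq r k)"

text \<open>Vertices of the polygonal representation (corners of the squares and endpoints of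
  the glued pieces of the left edge).  They all represent the single singular point.\<close>
definition arm_vert :: "real \<Rightarrow> (real \<times> real) set" where
  "arm_vert r = (\<Union>k\<in>{1..}. {(arm_s r (k - 1), 0), (arm_s r k, 0),
                               (arm_s r (k - 1), arm_l r k), (arm_s r k, arm_l r k),
                               (0, arm_l r k)})"

text \<open>Points in (the closure of) P representing the singularity of the metric completion:
  the vertices together with the accumulation point (s_\<infinity>, 0), s_\<infinity> = 1/(1-r).\<close>
definition arm_sing :: "real \<Rightarrow> (real \<times> real) set" where
  "arm_sing r = arm_vert r \<union> {(1 / (1 - r), 0)}"

text \<open>Edge gluings: bottom edge of each square to its top edge (vertical translation), and
  the free part \<open>{s_k} \<times> [l_{k+1}, l_k]\<close> of the right edge of square k to \<open>{0} \<times> [l_{k+1}, l_k]\<close>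
  (horizontal translation).\<close>
definition arm_glue1 :: "real \<Rightarrow> real \<times> real \<Rightarrow> real \<times> real \<Rightarrow> bool" where
  "arm_glue1 r p q \<longleftrightarrow>
     (\<exists>k\<ge>1. \<exists>x. arm_s r (k - 1) \<le> x \<and> x \<le> arm_s r k \<and> p = (x, 0) \<and> q = (x, arm_l r k)) \<or>
     (\<exists>k\<ge>1. \<exists>y. arm_l r (k + 1) \<le> y \<and> y \<le> arm_l r k \<and> p = (arm_s r k, y) \<and> q = (0, y))"

definition arm_glued :: "real \<Rightarrow> real \<times> real \<Rightarrow> real \<times> real \<Rightarrow> bool" where
  "arm_glued r p q \<longleftrightarrow> arm_glue1 r p q \<or> arm_glue1 r q p"

text \<open>A straight-line trajectory in direction parallel to w, unfolded in the polygon P: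
  a finite (I = {..<n}) or infinite (I = UNIV) sequence of nondegenerate segments
  [a i, b i] \<subseteq> P, each pointing in the same direction (a nonzero multiple of w),
  with no vertex in the open segments, consecutive segments joined through the gluing at
  non-vertex points; it starts at a vertex (the singularity).\<close>
definition arm_traj ::
  "real \<Rightarrow> real \<times> real \<Rightarrow> (nat \<Rightarrow> real \<times> real) \<Rightarrow> (nat \<Rightarrow> real \<times> real) \<Rightarrow> nat set \<Rightarrow> bool" where
  "arm_traj r w a b I \<longleftrightarrow>
     (\<exists>v. (\<exists>c. c \<noteq> 0 \<and> v = c *\<^sub>R w) \<and>
       (\<forall>i\<in>I. closed_segment (a i) (b i) \<subseteq> arm_P r \<and>
               (\<exists>t>0. b i - a i = t *\<^sub>R v) \<and>
               open_segment (a i) (b i) \<inter> arm_vert r = {})) \<and>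
     (\<forall>i. i \<in> I \<and> Suc i \<in> I \<longrightarrow> b i \<notin> arm_vert r \<and> arm_glued r (b i) (a (Suc i))) \<and>
     0 \<in> I \<and> a 0 \<in> arm_vert r"

text \<open>Saddle connection in direction parallel to w: either finitely many pieces ending at a
  vertex, or infinitely many pieces of finite total length whose endpoints approach the
  singular set (so the segment ends at the wild singularity of the metric completion).\<close>
definition arm_saddle_connection ::
  "real \<Rightarrow> real \<times> real \<Rightarrow> (nat \<Rightarrow> real \<times> real) \<Rightarrow> (nat \<Rightarrow> real \<times> real) \<Rightarrow> nat set \<Rightarrow> bool" where
  "arm_saddle_connection r w a b I \<longleftrightarrow>
     arm_traj r w a b I \<and>
     ((\<exists>n\<ge>1. I = {..<n} \<and> b (n - 1) \<in> arm_vert r) \<or>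
      (I = UNIV \<and> summable (\<lambda>i. dist (a i) (b i)) \<and>
       (\<lambda>i. infdist (b i) (arm_sing r)) \<longlonglongrightarrow> 0))"

definition arm_trace ::
  "(nat \<Rightarrow> real \<times> real) \<Rightarrow> (nat \<Rightarrow> real \<times> real) \<Rightarrow> nat set \<Rightarrow> (real \<times> real) set" where
  "arm_trace a b I = (\<Union>i\<in>I. closed_segment (a i) (b i))"

end

theory Submission
  imports Defs
begin

lemma s_0[simp]: "arm_s r 0 = 0" by (simp add: arm_s_def)
lemma s_Suc: "arm_s r (Suc n) = arm_s r n + r ^ n"
  by (simp add: arm_s_def arm_l_def)
lemma s_mono: assumes "0 < r" "m \<le> n" shows "arm_s r m \<le> arm_s r n"
  unfolding arm_s_def arm_l_def
  by (rule sum_mono2) (use assms in auto)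
lemma s_nonneg: "0 < r \<Longrightarrow> 0 \<le> arm_s r n"
  using s_mono[of r 0 n] by simp

lemma inP: assumes "k \<ge> 1" "arm_s r (k-1) \<le> x" "x \<le> arm_s r k" "0 \<le> y" "y \<le> r^(k-1)"
  shows "(x,y) \<in> arm_P r"
  unfolding arm_P_def arm_sq_def arm_l_def using assms by auto

lemma vert_pos: assumes "(x,y) \<in> arm_vert r" "y \<noteq> 0"
  shows "\<exists>k\<ge>1. y = r^(k-1) \<and> (x = arm_s r (k-1) \<or> x = arm_s r k \<or> x = 0)"
  using assms unfolding arm_vert_def arm_l_def by auto

lemma pow_eq: fixes r :: real assumes "0 < r" "r < 1" "r^m = r^n" shows "m = n"
proof (rule ccontr)
  assume "m \<noteq> n"
  then consider "m < n" | "n < m" by linarith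
  then show False
  proof cases
    case 1 then show False using assms power_strict_decreasing_iff[of r n m] by simp
  next
    case 2 then show False using assms power_strict_decreasing_iff[of r m n] by simp
  qed
qed

lemma seg_pt: fixes a b p :: "real \<times> real" assumes "p \<in> closed_segment a b"
  shows "\<exists>u. 0 \<le> u \<and> u \<le> 1 \<and> fst p = (1-u) * fst a + u * fst b \<and> snd p = (1-u) * snd a + u * snd b"
  using assms unfolding in_segment by auto

lemma oseg_pt: fixes a b p :: "real \<times> real" assumes "p \<in> open_segment a b"
  shows "\<exists>u. 0 < u \<and> u < 1 \<and> fst p = (1-u) * fst a + u * fst b \<and> snd p = (1-u) * snd a + u * snd b"
  using assms unfolding in_segment by auto

lemma segn_P:
  fixes r :: real
  assumes r: "0 < r" "r < 1"
  shows "closed_segment (arm_s r n + r^n*(1-r), 0) (arm_s r (Suc n) + r^Suc n*(1-r), r^Suc n) \<subseteq> arm_P r"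
proof
  fix p :: "real \<times> real" assume "p \<in> closed_segment (arm_s r n + r^n*(1-r), 0) (arm_s r (Suc n) + r^Suc n*(1-r), r^Suc n)"
  from seg_pt[OF this] obtain u where u: "0 \<le> u" "u \<le> 1"
    and px: "fst p = (1-u) * (arm_s r n + r^n*(1-r)) + u * (arm_s r (Suc n) + r^Suc n*(1-r))"
    and py: "snd p = u * r^Suc n" by auto
  define S where "S = arm_s r n"
  define q where "q = r^n"
  have q: "0 < q" using r by (simp add: q_def)
  have S1: "arm_s r (Suc n) = S + q" by (simp add: S_def q_def s_Suc)
  have S2: "arm_s r (Suc (Suc n)) = S + q + r*q" by (simp add: S_def q_def s_Suc)
  have "fst p = (1-u)*(S + q*(1-r)) + u*(S + q + r*q*(1-r))" using px S1 by (simp add: S_def q_def)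
  then have px': "fst p = S + q*(1-r) + u*(q*r*(2-r))" by (simp add: algebra_simps)
  have py': "snd p = u*(r*q)" using py by (simp add: q_def)
  have a1: "0 \<le> u*(q*r*(2-r))" using u q r by simp
  have a2: "u*(q*r*(2-r)) \<le> q*r*(2-r)" using u q r by (simp add: mult_left_le_one_le)
  have a3: "0 \<le> u*(r*q)" "u*(r*q) \<le> r*q" using u q r by (simp_all add: mult_left_le_one_le)
  have a4: "r*q \<le> q" using q r by simp
  have a5: "0 \<le> q*(1-r)" using q r by simp
  show "p \<in> arm_P r"
  proof (cases "fst p \<le> S + q")
    case True
    have "(fst p, snd p) \<in> arm_P r"
      by (rule inP[of "Suc n"]) (use True px' py' a1 a3 a4 a5 S1 in \<open>auto simp: S_def q_def\<close>)
    then show ?thesis by simp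
  next
    case False
    have "q*(1-r) + q*r*(2-r) = q + r*q*(1-r)" by (simp add: algebra_simps)
    moreover have "r*q*(1-r) \<le> r*q" using q r by simp
    ultimately have "fst p \<le> S + q + r*q" using px' a2 by linarith
    then have "(fst p, snd p) \<in> arm_P r"
      by (intro inP[of "Suc (Suc n)"]) (use False py' a3 S1 S2 in \<open>auto simp: q_def\<close>)
    then show ?thesis by simp
  qed
qed

lemma segn_V:
  fixes r :: real
  assumes r: "0 < r" "r < 1"
  shows "open_segment (arm_s r n + r^n*(1-r), 0) (arm_s r (Suc n) + r^Suc n*(1-r), r^Suc n) \<inter> arm_vert r = {}"
proof (rule ccontr)
  assume "\<not> ?thesis"
  then obtain p where p1: "p \<in> open_segment (arm_s r n + r^n*(1-r), 0) (arm_s r (Suc n) + r^Suc n*(1-r), r^Suc n)"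
    and p2: "p \<in> arm_vert r" by blast
  from oseg_pt[OF p1] obtain u where u: "0 < u" "u < 1"
    and px: "fst p = (1-u) * (arm_s r n + r^n*(1-r)) + u * (arm_s r (Suc n) + r^Suc n*(1-r))"
    and py: "snd p = u * r^Suc n" by auto
  define S where "S = arm_s r n"
  define q where "q = r^n"
  have q: "0 < q" using r by (simp add: q_def)
  have S0: "0 \<le> S" using s_nonneg[OF r(1)] by (simp add: S_def)
  have S1: "arm_s r (Suc n) = S + q" by (simp add: S_def q_def s_Suc)
  have S2: "arm_s r (Suc (Suc n)) = S + q + r*q" by (simp add: S_def q_def s_Suc)
  have "fst p = (1-u)*(S + q*(1-r)) + u*(S + q + r*q*(1-r))" using px S1 by (simp add: S_def q_def)
  then have px': "fst p = S + q*(1-r) + u*(q*r*(2-r))" by (simp add: algebra_simps)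
  have py': "snd p = u*(r*q)" using py by (simp add: q_def)
  have a1: "0 < u*(q*r*(2-r))" using u q r by simp
  have a2: "u*(q*r*(2-r)) < q*r*(2-r)" using u q r by simp
  have a3: "0 < u*(r*q)" "u*(r*q) < r*q" using u q r by simp_all
  have a5: "0 < q*(1-r)" using q r by simp
  have "q*(1-r) + q*r*(2-r) = q + r*q*(1-r)" by (simp add: algebra_simps)
  moreover have "r*q*(1-r) < r*q" using q r by simp
  ultimately have xlt: "fst p < S + q + r*q" using px' a2 by linarith
  have xpos: "0 < fst p" using px' S0 a1 a5 by linarith
  have "(fst p, snd p) \<in> arm_vert r" using p2 by simp
  moreover have "snd p \<noteq> 0" using a3 py' by linarith
  ultimately obtain k where k: "k \<ge> 1" "snd p = r^(k-1)"
    and kx: "fst p = arm_s r (k-1) \<or> fst p = arm_s r k \<or> fst p = 0"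
    using vert_pos by blast
  have "r^(k-1) < r^(Suc n)" using k a3 py' by (simp add: q_def)
  then have "Suc n < k - 1" by (metis power_strict_decreasing_iff r)
  then have "Suc (Suc n) \<le> k - 1" by simp
  then have "arm_s r (Suc (Suc n)) \<le> arm_s r (k-1)" "arm_s r (Suc (Suc n)) \<le> arm_s r k"
    using s_mono[OF r(1)] by auto
  then show False using kx xlt xpos S2 by auto
qed

lemma s_1: "arm_s r 1 = 1"
  using s_Suc[of r 0] by simp

lemma r_lt: fixes r :: real assumes "0 < r" "r < 1" shows "r < 1/(2-r)" "1/(2-r) < 1"
proof -
  have "(1-r)^2 > 0" using assms by simp
  then have "r*(2-r) < 1" by (simp add: power2_eq_square algebra_simps)
  then show "r < 1/(2-r)" using assms by (simp add: field_simps)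
  show "1/(2-r) < 1" using assms by (simp add: field_simps)
qed

lemma pow_le_r: fixes r :: real assumes "0 < r" "r < 1" "k \<ge> 2" shows "r^(k-1) \<le> r"
  using power_decreasing[of 1 "k-1" r] assms by simp

lemma vert_y_cases:
  fixes r :: real
  assumes r: "0 < r" "r < 1" and v: "(x,y) \<in> arm_vert r" "y \<noteq> 0"
  shows "(y = 1 \<and> (x = 0 \<or> x = 1)) \<or> (y \<le> r \<and> (x = 0 \<or> x \<ge> 1))"
proof -
  obtain k where k: "k \<ge> 1" "y = r^(k-1)" and kx: "x = arm_s r (k-1) \<or> x = arm_s r k \<or> x = 0"
    using vert_pos[OF v] by blast
  show ?thesis
  proof (cases "k = 1")
    case True
    then show ?thesis using k kx s_1[of r] by auto
  next
    case False
    then have "k \<ge> 2" using k by simp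
    then have "y \<le> r" using pow_le_r[OF r] k by simp
    moreover have "arm_s r 1 \<le> arm_s r (k-1)" "arm_s r 1 \<le> arm_s r k"
      using s_mono[OF r(1)] \<open>k \<ge> 2\<close> by auto
    ultimately show ?thesis using kx s_1[of r] by auto
  qed
qed

lemma seg0_P: fixes r :: real assumes r: "0 < r" "r < 1"
  shows "closed_segment (0,0) (1, 1/(2-r)) \<subseteq> arm_P r"
proof
  fix p :: "real \<times> real" assume "p \<in> closed_segment (0,0) (1, 1/(2-r))"
  from seg_pt[OF this] obtain u where u: "0 \<le> u" "u \<le> 1" and px: "fst p = u" and py: "snd p = u * (1/(2-r))" by auto
  have "u * (1/(2-r)) \<le> 1" using u r_lt[OF r] by (intro mult_le_one) auto
  moreover have "0 \<le> u * (1/(2-r))" using u r by simp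
  ultimately have "(fst p, snd p) \<in> arm_P r"
    using px py u s_1[of r] by (intro inP[of 1]) auto
  then show "p \<in> arm_P r" by simp
qed

lemma seg0_V: fixes r :: real assumes r: "0 < r" "r < 1"
  shows "open_segment (0,0) (1, 1/(2-r)) \<inter> arm_vert r = {}"
proof (rule ccontr)
  assume "\<not> ?thesis"
  then obtain p where p1: "p \<in> open_segment (0,0) (1, 1/(2-r))" and p2: "p \<in> arm_vert r" by blast
  from oseg_pt[OF p1] obtain u where u: "0 < u" "u < 1" and px: "fst p = u" and py: "snd p = u * (1/(2-r))" by auto
  have "u * (1/(2-r)) < 1 * (1/(2-r))" using u r by (intro mult_strict_right_mono) auto
  moreover have "0 < u * (1/(2-r))" using u r by simp
  ultimately have y1: "snd p < 1/(2-r)" "0 < snd p" using py by simp_all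
  have "(fst p, snd p) \<in> arm_vert r" using p2 by simp
  have "snd p \<noteq> 0" "snd p \<noteq> 1" using y1 r_lt[OF r] by auto
  moreover have "fst p \<noteq> 0" "fst p \<noteq> 1" "\<not> fst p \<ge> 1" using px u by auto
  ultimately show False using vert_y_cases[OF r \<open>(fst p, snd p) \<in> arm_vert r\<close>] by blast
qed

lemma seg1_P: fixes r :: real assumes r: "0 < r" "r < 1"
  shows "closed_segment (0, 1/(2-r)) (1-r, 1) \<subseteq> arm_P r"
proof
  fix p :: "real \<times> real" assume "p \<in> closed_segment (0, 1/(2-r)) (1-r, 1)"
  from seg_pt[OF this] obtain u where u: "0 \<le> u" "u \<le> 1" and px: "fst p = u*(1-r)" and py: "snd p = (1-u) * (1/(2-r)) + u" by auto
  have "(1-u) * (1/(2-r)) \<le> (1-u)*1" using u r_lt[OF r] by (intro mult_left_mono) auto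
  moreover have "0 \<le> (1-u) * (1/(2-r))" using u r by simp
  moreover have "u*(1-r) \<le> 1" using u r by (simp add: mult_le_one)
  moreover have "0 \<le> u*(1-r)" using u r by simp
  ultimately have "(fst p, snd p) \<in> arm_P r"
    using px py u s_1[of r] by (intro inP[of 1]) auto
  then show "p \<in> arm_P r" by simp
qed

lemma seg1_V: fixes r :: real assumes r: "0 < r" "r < 1"
  shows "open_segment (0, 1/(2-r)) (1-r, 1) \<inter> arm_vert r = {}"
proof (rule ccontr)
  assume "\<not> ?thesis"
  then obtain p where p1: "p \<in> open_segment (0, 1/(2-r)) (1-r, 1)" and p2: "p \<in> arm_vert r" by blast
  from oseg_pt[OF p1] obtain u where u: "0 < u" "u < 1" and px: "fst p = u*(1-r)" and py: "snd p = (1-u) * (1/(2-r)) + u" by auto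
  have f1: "(1-u) * (1/(2-r)) < (1-u)*1" using u r_lt[OF r] by (intro mult_strict_left_mono) auto
  have f2: "(1-u) * r < (1-u) * (1/(2-r))" by (rule mult_strict_left_mono) (use u r_lt[OF r] in auto)
  have f3: "(1-u)*r = r - u*r" by (simp add: algebra_simps)
  have f4: "u*r < u" using u r by simp
  have y1: "snd p < 1" using f1 py by simp
  have y2: "snd p > r" using f2 f3 f4 py by linarith
  have y3: "snd p \<noteq> 0" using y2 r by linarith
  have "(fst p, snd p) \<in> arm_vert r" using p2 by simp
  have "snd p \<noteq> 1" "\<not> snd p \<le> r" using y1 y2 by auto
  then show False using vert_y_cases[OF r \<open>(fst p, snd p) \<in> arm_vert r\<close>] y3 by blast
qed

theorem theorem2p1:
  fixes r :: real
  assumes "0 < r" and "r < 1"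
  shows "\<exists>a b I. arm_saddle_connection r (2 - r, 1) a b I \<and>
           (\<forall>k\<ge>1. arm_trace a b I \<inter> arm_sq r k \<noteq> {})"
proof -
  have r: "0 < r" "r < 1" using assms by auto
  have r2: "0 < 2 - r" using r by simp
  define A where "A n = (arm_s r n + r^n*(1-r), 0::real)" for n
  define B where "B n = (arm_s r (Suc n) + r^Suc n*(1-r), r^Suc n)" for n
  define a where "a i = (case i of 0 \<Rightarrow> (0,0) | Suc 0 \<Rightarrow> (0, 1/(2-r)) | Suc (Suc n) \<Rightarrow> A n)" for i
  define b where "b i = (case i of 0 \<Rightarrow> (1, 1/(2-r)) | Suc 0 \<Rightarrow> (1-r, 1) | Suc (Suc n) \<Rightarrow> B n)" for i
  have a0: "a 0 = (0,0)" and a1: "a (Suc 0) = (0,1/(2-r))" and a2: "a (Suc (Suc n)) = A n" for n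
    by (simp_all add: a_def)
  have b0: "b 0 = (1,1/(2-r))" and b1: "b (Suc 0) = (1-r,1)" and b2: "b (Suc (Suc n)) = B n" for n
    by (simp_all add: b_def)
  define w where "w = (2 - r, 1::real)"
  have xB1: "arm_s r (Suc n) < fst (B n)" and xB2: "fst (B n) < arm_s r (Suc (Suc n))" for n
  proof -
    have "0 < r^Suc n*(1-r)" using r by simp
    then show "arm_s r (Suc n) < fst (B n)" by (simp add: B_def)
    have "r^Suc n*(1-r) < r^Suc n" using r by simp
    then show "fst (B n) < arm_s r (Suc (Suc n))" by (simp add: B_def s_Suc[of r "Suc n"])
  qed
  have dirn: "B n - A n = r^Suc n *\<^sub>R w" for n
    by (simp add: A_def B_def w_def s_Suc algebra_simps)
  have dir0: "b 0 - a 0 = (1/(2-r)) *\<^sub>R w"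
    using r2 by (simp add: a0 b0 w_def)
  have dir1: "b (Suc 0) - a (Suc 0) = ((1-r)/(2-r)) *\<^sub>R w"
    using r2 by (simp add: a1 b1 w_def field_simps)
  have seg: "closed_segment (a i) (b i) \<subseteq> arm_P r \<and> (\<exists>t>0. b i - a i = t *\<^sub>R w) \<and>
             open_segment (a i) (b i) \<inter> arm_vert r = {}" for i
  proof (cases i)
    case 0
    have e: "\<exists>t>0. b 0 - a 0 = t *\<^sub>R w" by (rule exI[of _ "1/(2-r)"]) (use dir0 r2 in simp)
    show ?thesis unfolding 0 using seg0_P[OF r] seg0_V[OF r] e by (simp only: a0 b0, (simp)?)
  next
    case (Suc j)
    show ?thesis
    proof (cases j)
      case 0
      have "(1-r)/(2-r) > 0" using r by simp
      then have e: "\<exists>t>0. b (Suc 0) - a (Suc 0) = t *\<^sub>R w" using dir1 by blast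
      show ?thesis unfolding Suc 0 using seg1_P[OF r] seg1_V[OF r] e by (simp only: a1 b1, (simp)?)
    next
      case (Suc n)
      have "r^Suc n > 0" using r by simp
      then have e: "\<exists>t>0. b (Suc (Suc n)) - a (Suc (Suc n)) = t *\<^sub>R w" using dirn[of n] a2 b2 by auto
      show ?thesis unfolding \<open>i = Suc j\<close> Suc using segn_P[OF r, of n] segn_V[OF r, of n] e
        by (simp only: a2 b2 A_def B_def, (simp)?)
    qed
  qed
  have bnv: "b i \<notin> arm_vert r" for i
  proof (cases i)
    case 0
    show ?thesis
    proof
      assume "b i \<in> arm_vert r"
      then have "(1, 1/(2-r)) \<in> arm_vert r" using 0 b0 by simp
      from vert_y_cases[OF r this] r_lt[OF r] show False by auto
    qed
  next
    case (Suc j)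
    show ?thesis
    proof (cases j)
      case 0
      show ?thesis
      proof
        assume "b i \<in> arm_vert r"
        then have "(1-r, 1) \<in> arm_vert r" using Suc 0 b1 by simp
        from vert_y_cases[OF r this] r show False by auto
      qed
    next
      case (Suc n)
      show ?thesis
      proof
        assume "b i \<in> arm_vert r"
        then have "(fst (B n), r^Suc n) \<in> arm_vert r" using \<open>i = Suc j\<close> Suc b2 by (simp add: B_def)
        moreover have "r^Suc n \<noteq> 0" using r by simp
        ultimately obtain k where k: "k \<ge> 1" "r^Suc n = r^(k-1)"
          and kx: "fst (B n) = arm_s r (k-1) \<or> fst (B n) = arm_s r k \<or> fst (B n) = 0"
          using vert_pos by blast
        have "Suc n = k - 1" using pow_eq[OF r k(2)] .
        then have "k = Suc (Suc n)" using k by simp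
        moreover have "0 \<le> arm_s r (Suc n)" using s_nonneg[OF r(1)] .
        ultimately show False using kx xB1[of n] xB2[of n] by auto
      qed
    qed
  qed
  have glue: "arm_glued r (b i) (a (Suc i))" for i
  proof (cases i)
    case 0
    have "arm_glue1 r (b 0) (a (Suc 0))"
      unfolding arm_glue1_def
      by (intro disjI2 exI[of _ "1::nat"] exI[of _ "1/(2-r)"])
         (use r_lt[OF r] in \<open>auto simp: arm_l_def s_1 s_Suc a1 b0\<close>)
    then show ?thesis using 0 by (simp add: arm_glued_def)
  next
    case (Suc j)
    show ?thesis
    proof (cases j)
      case 0
      have "arm_glue1 r (a (Suc (Suc 0))) (b (Suc 0))"
        unfolding arm_glue1_def
        by (intro disjI1 exI[of _ "1::nat"] exI[of _ "1-r"])
           (use r in \<open>auto simp: arm_l_def s_1 s_Suc a2 b1 A_def\<close>)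
      then show ?thesis using Suc 0 by (simp add: arm_glued_def)
    next
      case (Suc n)
      have "arm_glue1 r (a (Suc (Suc (Suc n)))) (b (Suc (Suc n)))"
        unfolding arm_glue1_def
        by (intro disjI1 exI[of _ "Suc (Suc n)"] exI[of _ "fst (B n)"])
           (use xB1[of n] xB2[of n] in \<open>auto simp: arm_l_def a2 b2 A_def B_def\<close>)
      then show ?thesis using \<open>i = Suc j\<close> Suc by (simp add: arm_glued_def)
    qed
  qed
  have av: "a 0 \<in> arm_vert r"
    unfolding arm_vert_def a0 by (rule UN_I[of 1]) auto
  have traj: "arm_traj r w a b UNIV"
    unfolding arm_traj_def
    by (intro conjI exI[of _ w]) (use seg bnv glue av in auto)
  define C where "C = norm w"
  have dAB: "dist (a (n+2)) (b (n+2)) = r^n * (r * C)" for n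
  proof -
    have "dist (a (n+2)) (b (n+2)) = norm (B n - A n)"
      using a2 b2 by (simp add: dist_norm norm_minus_commute)
    also have "\<dots> = r^Suc n * C" using r by (simp add: dirn C_def)
    finally show ?thesis by simp
  qed
  have "summable (\<lambda>n. r^n)" by (rule summable_geometric) (use r in simp)
  then have "summable (\<lambda>n. r^n * (r * C))" by (rule summable_mult2)
  then have "summable (\<lambda>n. dist (a (n+2)) (b (n+2)))" by (simp only: dAB)
  then have summ: "summable (\<lambda>i. dist (a i) (b i))" by (rule iffD1[OF summable_iff_shift])
  have vB: "(arm_s r (Suc n), r^Suc n) \<in> arm_sing r" for n
    unfolding arm_sing_def arm_vert_def
    by (rule UnI1, rule UN_I[of "Suc (Suc n)"]) (auto simp: arm_l_def)
  have bnd: "norm (infdist (b (n+2)) (arm_sing r)) \<le> r^n * (r*(1-r))" for n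
  proof -
    have "infdist (b (n+2)) (arm_sing r) \<le> dist (b (n+2)) (arm_s r (Suc n), r^Suc n)"
      by (rule infdist_le[OF vB])
    also have "\<dots> = r^n * (r*(1-r))" using r b2[of n]
      by (simp add: B_def dist_Pair_Pair dist_real_def)
    finally show ?thesis by (simp add: infdist_nonneg)
  qed
  have "(\<lambda>n. r^n * (r*(1-r))) \<longlonglongrightarrow> 0"
    by (rule tendsto_mult_left_zero, rule LIMSEQ_power_zero) (use r in simp)
  then have "(\<lambda>n. infdist (b (n+2)) (arm_sing r)) \<longlonglongrightarrow> 0"
    by (rule Lim_null_comparison[rotated]) (use bnd in simp)
  then have lim: "(\<lambda>i. infdist (b i) (arm_sing r)) \<longlonglongrightarrow> 0"
    by (rule LIMSEQ_offset)
  have sc: "arm_saddle_connection r (2 - r, 1) a b UNIV"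
    unfolding arm_saddle_connection_def using traj summ lim by (simp add: w_def)
  have tr: "arm_trace a b UNIV \<inter> arm_sq r k \<noteq> {}" if "k \<ge> 1" for k
  proof (cases "k = 1")
    case True
    have "a 0 \<in> arm_trace a b UNIV" unfolding arm_trace_def by auto
    moreover have "a 0 \<in> arm_sq r k" using True r by (simp add: a0 arm_sq_def arm_l_def s_Suc)
    ultimately show ?thesis by blast
  next
    case False
    define n where "n = k - 2"
    have n: "k = Suc (Suc n)" using that False unfolding n_def by linarith
    have "b k \<in> arm_trace a b UNIV" unfolding arm_trace_def by auto
    moreover have "b k \<in> arm_sq r k" using n xB1[of n] xB2[of n] r b2[of n]
      by (simp add: arm_sq_def arm_l_def B_def)
    ultimately show ?thesis by blast
  qed
  show ?thesis using sc tr by blast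
qed

end
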